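(* Let $P_1$ be the uniform distribution on $[0,\frac12]$, let $P_2$ be the uniform distribution on $[\frac34,1]$, and let $P=\frac34P_1+\frac14P_2$. Then the set $\{\frac14,\frac78\}$ is an optimal set of two-means for $P$, and the corresponding quantization error is $V_2=\frac{13}{768}$.
   Context: For a finite set $\alpha\subset\mathbb R$, $V(P;\alpha)=\int\min_{a\in\alpha}(x-a)^2\,dP(x)$; $V_n=\inf\{V(P;\alpha):\mathrm{card}(\alpha)\le n\}$; an optimal set of $n$-means is a set $\alpha$ with $\mathrm{card}(\alpha)\le n$ and $V(P;\alpha)=V_n$. *)

theory Defs
  imports "HOL-Probability.Probability"
begin

definition qerr :: "real measure \<Rightarrow> real set \<Rightarrow> real" where
  "qerr M \<alpha> = (\<integral>x. Min ((\<lambda>a. (x - a)^2) ` \<alpha>) \<partial>M)"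

definition Vn :: "real measure \<Rightarrow> nat \<Rightarrow> real" where
  "Vn M n = Inf {qerr M \<alpha> | \<alpha>. finite \<alpha> \<and> \<alpha> \<noteq> {} \<and> card \<alpha> \<le> n}"

definition optimal_n_means :: "real measure \<Rightarrow> nat \<Rightarrow> real set \<Rightarrow> bool" where
  "optimal_n_means M n \<alpha> \<longleftrightarrow> finite \<alpha> \<and> \<alpha> \<noteq> {} \<and> card \<alpha> \<le> n \<and> qerr M \<alpha> = Vn M n"

definition unif_pdf :: "real \<Rightarrow> real \<Rightarrow> real \<Rightarrow> real" where
  "unif_pdf a b x = indicator {a..b} x / (b - a)"

definition P :: "real measure" where
  "P = density lborel (\<lambda>x. ennreal (3/4 * unif_pdf 0 (1/2) x + 1/4 * unif_pdf (3/4) 1 x))"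

end

theory Submission
  imports Defs
begin

definition J :: "real \<Rightarrow> real \<Rightarrow> real \<Rightarrow> real" where
  "J u v a = ((v-a)^3 - (u-a)^3)/3"

lemma sq_int:
  assumes "u \<le> v"
  shows "((\<lambda>x. (x-a)^2) has_integral J u v a) {u..v}"
proof -
  have "((\<lambda>x::real. (x-a)^2) has_integral ((\<lambda>x. (x-a)^3/3) v - (\<lambda>x. (x-a)^3/3) u)) {u..v}"
    apply (rule fundamental_theorem_of_calculus[OF assms])
    apply (auto intro!: derivative_eq_intros simp: has_real_derivative_iff_has_vector_derivative[symmetric])
    done
  then show ?thesis by (simp add: J_def diff_divide_distrib)
qed

lemma min_int:
  assumes "u \<le> v" "a \<le> b"
  shows "((\<lambda>x. min ((x-a)^2) ((x-b)^2)) has_integral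
           (J u (max u (min ((a+b)/2) v)) a + J (max u (min ((a+b)/2) v)) v b)) {u..v}"
proof -
  define c where "c = max u (min ((a+b)/2) v)"
  have uc: "u \<le> c" and cv: "c \<le> v" using assms by (auto simp: c_def)
  have le1: "(x-a)^2 \<le> (x-b)^2" if "x \<le> (a+b)/2" for x :: real
  proof -
    have "(x-b)^2 - (x-a)^2 = (b-a)*((a+b) - 2*x)" by (simp add: power2_eq_square algebra_simps)
    also have "\<dots> \<ge> 0" using that assms by simp
    finally show ?thesis by simp
  qed
  have le2: "(x-b)^2 \<le> (x-a)^2" if "x \<ge> (a+b)/2" for x :: real
  proof -
    have "(x-a)^2 - (x-b)^2 = (b-a)*(2*x - (a+b))" by (simp add: power2_eq_square algebra_simps)
    also have "\<dots> \<ge> 0" using that assms by simp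
    finally show ?thesis by simp
  qed
  have I1: "((\<lambda>x. min ((x-a)^2) ((x-b)^2)) has_integral J u c a) {u..c}"
  proof (cases "u = c")
    case True
    then show ?thesis using has_integral_refl(1)[of "\<lambda>x. min ((x-a)^2) ((x-b)^2)" c]
      by (simp add: J_def)
  next
    case False
    then have "c \<le> (a+b)/2" using uc unfolding c_def by (auto simp: max_def min_def split: if_splits)
    then have "((\<lambda>x. min ((x-a)^2) ((x-b)^2)) has_integral J u c a) {u..c} =
               ((\<lambda>x. (x-a)^2) has_integral J u c a) {u..c}"
      by (intro has_integral_cong) (auto intro!: min_absorb1 le1)
    then show ?thesis using sq_int[OF uc] by simp
  qed
  have I2: "((\<lambda>x. min ((x-a)^2) ((x-b)^2)) has_integral J c v b) {c..v}"
  proof (cases "c = v")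
    case True
    then show ?thesis using has_integral_refl(1)[of "\<lambda>x. min ((x-a)^2) ((x-b)^2)" c]
      by (simp add: J_def)
  next
    case False
    then have "c \<ge> (a+b)/2" using cv assms(1) unfolding c_def by (auto simp: max_def min_def split: if_splits)
    then have "((\<lambda>x. min ((x-a)^2) ((x-b)^2)) has_integral J c v b) {c..v} =
               ((\<lambda>x. (x-b)^2) has_integral J c v b) {c..v}"
      by (intro has_integral_cong) (auto intro!: min_absorb2 le2)
    then show ?thesis using sq_int[OF cv] by simp
  qed
  show ?thesis using has_integral_combine[OF uc cv I1 I2] by (simp add: c_def)
qed


lemma set_int_min:
  assumes "u \<le> v" "a \<le> b"
  shows "(LINT x:{u..v}|lborel. min ((x-a)^2) ((x-b)^2)) =
           J u (max u (min ((a+b)/2) v)) a + J (max u (min ((a+b)/2) v)) v b"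
    and "set_integrable lborel {u..v} (\<lambda>x. min ((x-a)^2) ((x-b)^2))"
proof -
  show si: "set_integrable lborel {u..v} (\<lambda>x. min ((x-a)^2) ((x-b)^2))"
    by (intro borel_integrable_atLeastAtMost' continuous_intros)
  show "(LINT x:{u..v}|lborel. min ((x-a)^2) ((x-b)^2)) =
           J u (max u (min ((a+b)/2) v)) a + J (max u (min ((a+b)/2) v)) v b"
    using set_borel_integral_eq_integral(2)[OF si] integral_unique[OF min_int[OF assms]] by simp
qed

definition E :: "real \<Rightarrow> real \<Rightarrow> real \<Rightarrow> real \<Rightarrow> real" where
  "E a b c1 c2 = 3/2 * (J 0 c1 a + J c1 (1/2) b) + (J (3/4) c2 a + J c2 1 b)"

lemma qerr_ab:
  assumes "a \<le> b"
  shows "qerr P {a,b} = E a b (max 0 (min ((a+b)/2) (1/2))) (max (3/4) (min ((a+b)/2) 1))"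
proof -
  define f where "f = (\<lambda>x::real. min ((x-a)^2) ((x-b)^2))"
  have Min: "Min ((\<lambda>c. (x-c)^2) ` {a,b}) = f x" for x by (simp add: f_def)
  have g: "3/4 * unif_pdf 0 (1/2) x + 1/4 * unif_pdf (3/4) 1 x
      = 3/2 * indicator {0..1/2} x + indicator {3/4..1} x" for x :: real
    by (simp add: unif_pdf_def)
  have "qerr P {a,b} = (\<integral>x. f x \<partial>P)" by (simp add: qerr_def f_def)
  also have "\<dots> = (\<integral>x. (3/2 * indicator {0..1/2} x + indicator {3/4..1} x) *\<^sub>R f x \<partial>lborel)"
    unfolding P_def g
    by (rule integral_density) (auto simp: f_def)
  also have "\<dots> = (\<integral>x. 3/2 * (indicator {0..1/2} x *\<^sub>R f x) + indicator {3/4..1} x *\<^sub>R f x \<partial>lborel)"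
    by (simp add: algebra_simps)
  also have "\<dots> = 3/2 * (LINT x:{0..1/2}|lborel. f x) + (LINT x:{3/4..1}|lborel. f x)"
    using set_int_min(2)[OF _ assms, of 0 "1/2"] set_int_min(2)[OF _ assms, of "3/4" 1]
    unfolding set_lebesgue_integral_def set_integrable_def f_def
    by (subst Bochner_Integration.integral_add) auto
  also have "\<dots> = E a b (max 0 (min ((a+b)/2) (1/2))) (max (3/4) (min ((a+b)/2) 1))"
  proof -
    have A: "(LINT x:{0..1/2}|lborel. f x) = J 0 (max 0 (min ((a+b)/2) (1/2))) a + J (max 0 (min ((a+b)/2) (1/2))) (1/2) b"
      using set_int_min(1)[OF _ assms, of 0 "1/2"] unfolding f_def by simp
    have B: "(LINT x:{3/4..1}|lborel. f x) = J (3/4) (max (3/4) (min ((a+b)/2) 1)) a + J (max (3/4) (min ((a+b)/2) 1)) 1 b"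
      using set_int_min(1)[OF _ assms, of "3/4" 1] unfolding f_def by simp
    show ?thesis unfolding E_def A B ..
  qed
  finally show ?thesis .
qed

lemma case_i:
  assumes "0 \<le> t" "t \<le> 1/2"
  shows "E a b t (3/4) \<ge> 13/768"
proof (cases "t = 0")
  case True
  have "E a b t (3/4) - 13/768 = (b - 13/32)^2 + 75/1024"
    using True by (simp add: E_def J_def power2_eq_square power3_eq_cube field_simps)
  then show ?thesis using zero_le_power2[of "b - 13/32"] by linarith
next
  case False
  define w1 where "w1 = 3*t/2"
  define w2 where "w2 = 1 - 3*t/2"
  define M1 where "M1 = 3*t^2/4"
  define M2 where "M2 = 13/32 - 3*t^2/4"
  have w1: "w1 > 0" using False assms by (simp add: w1_def)
  have w2: "w2 > 0" using assms by (simp add: w2_def)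
  have q: "225/1024 - 81/128*t + 9/16*t^2 > 0"
  proof -
    have "225/1024 - 81/128*t + 9/16*t^2 = 9/16*(t - 9/16)^2 + 171/4096"
      by (simp add: power2_eq_square algebra_simps)
    moreover have "0 \<le> 9/16*(t - 9/16)^2" by simp
    ultimately show ?thesis by linarith
  qed
  have id: "w1*w2*(E a b t (3/4) - 13/768) = w2*(w1*a - M1)^2 + w1*(w2*b - M2)^2
       + t*(1/2 - t)*(225/1024 - 81/128*t + 9/16*t^2)"
    by (simp add: E_def J_def w1_def w2_def M1_def M2_def power2_eq_square power3_eq_cube field_simps)
  have "0 \<le> w1*w2*(E a b t (3/4) - 13/768)"
  proof -
    have "0 \<le> w2*(w1*a - M1)^2" using w2 by simp
    moreover have "0 \<le> w1*(w2*b - M2)^2" using w1 by simp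
    moreover have "0 \<le> t*(1/2 - t)" using assms by simp
    moreover have "0 \<le> t*(1/2 - t)*(225/1024 - 81/128*t + 9/16*t^2)"
      using calculation(3) q by simp
    ultimately show ?thesis unfolding id by linarith
  qed
  then have "0 \<le> E a b t (3/4) - 13/768" using mult_pos_pos[OF w1 w2]
    by (simp add: zero_le_mult_iff)
  then show ?thesis by simp
qed

lemma case_ii:
  assumes "3/4 \<le> s" "s \<le> 1"
  shows "E a b (1/2) s \<ge> 13/768"
proof (cases "s = 1")
  case True
  have "E a b (1/2) s - 13/768 = (a - 13/32)^2 + 75/1024"
    using True by (simp add: E_def J_def power2_eq_square power3_eq_cube field_simps)
  then show ?thesis using zero_le_power2[of "a - 13/32"] by linarith
next
  case False
  define w1 where "w1 = s"
  define w2 where "w2 = 1 - s"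
  define M1 where "M1 = s^2/2 - 3/32"
  define M2 where "M2 = (1 - s^2)/2"
  have w1: "w1 > 0" using assms by (simp add: w1_def)
  have w2: "w2 > 0" using False assms by (simp add: w2_def)
  have id: "w1*w2*(E a b (1/2) s - 13/768) = w2*(w1*a - M1)^2 + w1*(w2*b - M2)^2
       + (1 - s)*(s - 3/4)*(3/256 + s/32 + s^2/4)"
    by (simp add: E_def J_def w1_def w2_def M1_def M2_def power2_eq_square power3_eq_cube field_simps)
  have "0 \<le> w1*w2*(E a b (1/2) s - 13/768)"
    unfolding id using w1 w2 assms by (intro add_nonneg_nonneg mult_nonneg_nonneg) auto
  then have "0 \<le> E a b (1/2) s - 13/768" using mult_pos_pos[OF w1 w2]
    by (simp add: zero_le_mult_iff)
  then show ?thesis by simp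
qed

lemma lower_ab:
  assumes "a \<le> b"
  shows "qerr P {a,b} \<ge> 13/768"
proof (cases "(a+b)/2 \<le> 1/2")
  case True
  then have "max (3/4) (min ((a+b)/2) 1) = 3/4" by simp
  moreover have "0 \<le> max 0 (min ((a+b)/2) (1/2))" "max 0 (min ((a+b)/2) (1/2)) \<le> 1/2" by auto
  ultimately show ?thesis unfolding qerr_ab[OF assms] using case_i by metis
next
  case False
  then have "max 0 (min ((a+b)/2) (1/2)) = 1/2" by simp
  moreover have "3/4 \<le> max (3/4) (min ((a+b)/2) 1)" "max (3/4) (min ((a+b)/2) 1) \<le> 1" by auto
  ultimately show ?thesis unfolding qerr_ab[OF assms] using case_ii by metis
qed

lemma two_pts:
  assumes "finite A" "A \<noteq> {}" "card A \<le> 2"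
  obtains a b :: real where "a \<le> b" "A = {a,b}"
proof -
  have "card A = 1 \<or> card A = 2" using assms card_0_eq by fastforce
  then show ?thesis
  proof
    assume "card A = 1"
    then obtain a where "A = {a}" by (auto simp: card_1_singleton_iff)
    then show ?thesis using that[of a a] by simp
  next
    assume "card A = 2"
    then obtain a b where "A = {a,b}" by (auto simp: card_2_iff)
    then show ?thesis using that[of a b] that[of b a]
      by (cases "a \<le> b") (auto simp: insert_commute)
  qed
qed

theorem lemma3p3:
  shows "optimal_n_means P 2 {1/4, 7/8} \<and> Vn P 2 = 13/768"
proof -
  have q: "qerr P {1/4, 7/8} = 13/768"
    by (subst qerr_ab) (simp_all add: E_def J_def power3_eq_cube)
  have V: "Vn P 2 = 13/768"
    unfolding Vn_def
  proof (rule cInf_eq_minimum)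
    show "13/768 \<in> {qerr P \<alpha> |\<alpha>. finite \<alpha> \<and> \<alpha> \<noteq> {} \<and> card \<alpha> \<le> 2}"
      using q by (intro CollectI exI[of _ "{1/4, 7/8}"]) auto
  next
    fix x assume "x \<in> {qerr P \<alpha> |\<alpha>. finite \<alpha> \<and> \<alpha> \<noteq> {} \<and> card \<alpha> \<le> 2}"
    then obtain A where A: "x = qerr P A" "finite A" "A \<noteq> {}" "card A \<le> 2" by auto
    then obtain a b where "a \<le> b" "A = {a,b}" using two_pts by metis
    then show "13/768 \<le> x" using A lower_ab by simp
  qed
  show ?thesis unfolding optimal_n_means_def using q V by auto
qed

end
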